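(* Let $S$ be an invariant star in $\mathbb{R}^N$ with internal vertex $0$, external vertices $\vec v_1,\dots,\vec v_n$ and invariant constant $\gamma$. Suppose the centre of mass $\frac1n\sum_\ell\vec v_\ell$ is non-zero, let $b>0$ be its distance from the origin and $\vec e=\sum_\ell\vec v_\ell/\|\sum_\ell\vec v_\ell\|$. For any real $x\ne-nb$, the star with internal vertex $0$ and the $n+1$ external vertices $\vec v_1,\dots,\vec v_n,x\vec e$ is invariant, with invariant constant $$\tilde\gamma=\frac{(n+1)(x^2+nb^2\gamma)}{(x+nb)^2}.$$
   Context: Let $P:\mathbb{R}^N\to\mathbb{C}$, $P(y_1,\dots,y_N)=y_1+iy_2$. A star in $\mathbb{R}^N$ with internal vertex $0$ and external vertices $\vec x_1,\dots,\vec x_m$ is invariant, with invariant constant $\gamma\in\mathbb{R}$, if for every orthogonal transformation $A$ of $\mathbb{R}^N$, setting $z_\ell=P(A\vec x_\ell)$, one has $\frac{\gamma}{m}\big(\sum_\ell z_\ell\big)^2=\sum_\ell z_\ell^2$. *)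

theory Defs
  imports "HOL-Analysis.Analysis"
begin

(* Coordinates of R^N = real^'n are indexed by a finite well-ordered type 'n;
   the first and second coordinates are the least and second-least index. *)
definition coord1 :: "'n::{finite,wellorder}" where
  "coord1 = (LEAST i. True)"

definition coord2 :: "'n::{finite,wellorder}" where
  "coord2 = (LEAST i. i \<noteq> coord1)"

definition Pc :: "real ^ 'n::{finite,wellorder} \<Rightarrow> complex" where
  "Pc y = Complex (y $ coord1) (y $ coord2)"

(* A star with internal vertex 0 and external vertices xs (a list, m = length xs)
   is invariant with invariant constant gamma. *)
definition invariant_star :: "(real ^ 'n::{finite,wellorder}) list \<Rightarrow> real \<Rightarrow> bool" where
  "invariant_star xs \<gamma> \<longleftrightarrow>
     (\<forall>A :: real ^ 'n::{finite,wellorder} \<Rightarrow> real ^ 'n::{finite,wellorder}. orthogonal_transformation A \<longrightarrow>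
        (let zs = map (\<lambda>x. Pc (A x)) xs in
           complex_of_real (\<gamma> / real (length xs)) * (sum_list zs)\<^sup>2
           = sum_list (map (\<lambda>z. z\<^sup>2) zs)))"

end

theory Submission
  imports Defs
begin

lemma Pc_add: "Pc (a + b) = Pc a + Pc b"
  by (simp add: Pc_def complex_eq_iff)

lemma Pc_scale: "Pc (c *\<^sub>R a) = complex_of_real c * Pc a"
  by (simp add: Pc_def complex_eq_iff)

lemma Pc_zero: "Pc 0 = 0"
  by (simp add: Pc_def complex_eq_iff)

lemma Pc_sum_list:
  assumes "linear A"
  shows "Pc (A (sum_list vs)) = sum_list (map (\<lambda>v. Pc (A v)) vs)"
  by (induction vs) (auto simp: linear_add[OF assms] linear_0[OF assms] Pc_add Pc_zero)

theorem lemmaA1: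
  fixes vs :: "(real ^ 'n::{finite,wellorder}) list"
    and \<gamma> x b :: real and e :: "real ^ 'n::{finite,wellorder}"
  assumes "CARD('n) \<ge> 2"
    and "vs \<noteq> []"
    and "invariant_star vs \<gamma>"
    and "sum_list vs \<noteq> 0"
    and "b = norm ((1 / real (length vs)) *\<^sub>R sum_list vs)"
    and "e = (1 / norm (sum_list vs)) *\<^sub>R sum_list vs"
    and "x \<noteq> - real (length vs) * b"
  shows "invariant_star (vs @ [x *\<^sub>R e])
           ((real (length vs) + 1) * (x\<^sup>2 + real (length vs) * b\<^sup>2 * \<gamma>)
              / (x + real (length vs) * b)\<^sup>2)"
  unfolding invariant_star_def Let_def
proof (intro allI impI)
  fix A :: "(real, 'n) vec \<Rightarrow> (real, 'n) vec"
  assume oA: "orthogonal_transformation A"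
  hence lin: "linear A" by (simp add: orthogonal_transformation_def)
  define n where "n = real (length vs)"
  have npos: "n > 0" using assms(2) by (simp add: n_def)
  have nb: "norm (sum_list vs) = n * b" using assms(5) npos by (simp add: n_def)
  have bpos: "b > 0" using nb npos assms(4)
  proof -
    have "n * b > 0" using nb assms(4) by (metis zero_less_norm_iff)
    thus ?thesis using npos by (simp add: zero_less_mult_iff)
  qed
  have xnb: "x + n * b \<noteq> 0" using assms(7) by (simp add: n_def)
  define Z where "Z = sum_list (map (\<lambda>v. Pc (A v)) vs)"
  define Q where "Q = sum_list (map (\<lambda>z. z\<^sup>2) (map (\<lambda>v. Pc (A v)) vs))"
  have inv: "complex_of_real (\<gamma> / n) * Z\<^sup>2 = Q"
    using assms(3) oA unfolding invariant_star_def Let_def Z_def Q_def n_def by blast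
  define t where "t = x / (n * b)"
  have w: "Pc (A (x *\<^sub>R e)) = complex_of_real t * Z"
    unfolding assms(6) Z_def t_def
    by (simp add: linear_scale[OF lin] Pc_scale Pc_sum_list[OF lin] nb)
  have lhs_sum: "sum_list (map (\<lambda>v. Pc (A v)) (vs @ [x *\<^sub>R e])) = (1 + complex_of_real t) * Z"
    using w by (simp add: Z_def algebra_simps)
  have rhs_sum: "sum_list (map (\<lambda>z. z\<^sup>2) (map (\<lambda>v. Pc (A v)) (vs @ [x *\<^sub>R e]))) = Q + (complex_of_real t * Z)\<^sup>2"
    using w by (simp add: Q_def)
  have len: "real (length (vs @ [x *\<^sub>R e])) = n + 1" by (simp add: n_def)
  have key: "(n + 1) * (x\<^sup>2 + n * b\<^sup>2 * \<gamma>) / (x + n * b)\<^sup>2 / (n + 1) * (1 + t)\<^sup>2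
       = \<gamma> / n + t\<^sup>2"
  proof -
    have nb0: "n * b \<noteq> 0" using npos bpos by simp
    have h1: "1 + t = (x + n * b) / (n * b)" unfolding t_def using nb0 by (simp add: field_simps)
    have "(n + 1) * (x\<^sup>2 + n * b\<^sup>2 * \<gamma>) / (x + n * b)\<^sup>2 / (n + 1) * (1 + t)\<^sup>2
        = (x\<^sup>2 + n * b\<^sup>2 * \<gamma>) / (n * b)\<^sup>2"
      unfolding h1 using npos xnb nb0 by (simp add: power_divide)
    also have "\<dots> = \<gamma> / n + t\<^sup>2" unfolding t_def using npos bpos
      by (simp add: field_simps power2_eq_square)
    finally show ?thesis .
  qed
  have key': "complex_of_real ((n + 1) * (x\<^sup>2 + n * b\<^sup>2 * \<gamma>) / (x + n * b)\<^sup>2 / (n + 1)) * (1 + complex_of_real t)\<^sup>2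
       = complex_of_real (\<gamma> / n) + (complex_of_real t)\<^sup>2"
  proof -
    have "complex_of_real ((n + 1) * (x\<^sup>2 + n * b\<^sup>2 * \<gamma>) / (x + n * b)\<^sup>2 / (n + 1) * (1 + t)\<^sup>2)
       = complex_of_real (\<gamma> / n + t\<^sup>2)" using key by simp
    thus ?thesis by simp
  qed
  show "complex_of_real ((real (length vs) + 1) * (x\<^sup>2 + real (length vs) * b\<^sup>2 * \<gamma>)
              / (x + real (length vs) * b)\<^sup>2 / real (length (vs @ [x *\<^sub>R e]))) *
        (sum_list (map (\<lambda>x. Pc (A x)) (vs @ [x *\<^sub>R e])))\<^sup>2 =
        sum_list (map (\<lambda>z. z\<^sup>2) (map (\<lambda>x. Pc (A x)) (vs @ [x *\<^sub>R e])))"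
    unfolding lhs_sum rhs_sum len n_def[symmetric] inv[symmetric]
  proof -
    have "complex_of_real ((n + 1) * (x\<^sup>2 + n * b\<^sup>2 * \<gamma>) / (x + n * b)\<^sup>2 / (n + 1)) * ((1 + complex_of_real t) * Z)\<^sup>2
      = (complex_of_real ((n + 1) * (x\<^sup>2 + n * b\<^sup>2 * \<gamma>) / (x + n * b)\<^sup>2 / (n + 1)) * (1 + complex_of_real t)\<^sup>2) * Z\<^sup>2"
      by (simp add: power_mult_distrib)
    also have "\<dots> = complex_of_real (\<gamma> / n) * Z\<^sup>2 + (complex_of_real t * Z)\<^sup>2"
      unfolding key' by (simp add: algebra_simps power_mult_distrib)
    finally show "complex_of_real ((n + 1) * (x\<^sup>2 + n * b\<^sup>2 * \<gamma>) / (x + n * b)\<^sup>2 / (n + 1)) * ((1 + complex_of_real t) * Z)\<^sup>2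
      = complex_of_real (\<gamma> / n) * Z\<^sup>2 + (complex_of_real t * Z)\<^sup>2" .
  qed
qed

end
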